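(* For every integer $N\ge16$, \[ h(N)\le \lfloor\sqrt{N}\rfloor+\big\lfloor\sqrt{\lfloor\sqrt{N}\rfloor}\big\rfloor+2. \]
   Context: A finite set $A\subseteq\mathbb{Z}$ is Sidon if $a+b=c+d$ with $a,b,c,d\in A$ implies $\{a,b\}=\{c,d\}$ as unordered pairs. For a natural number $N$, $h(N)=\max\{|A| : A\subseteq\{1,\dots,N\},\ A\text{ Sidon}\}$. *)

theory Defs
  imports Complex_Main
begin

definition sidon :: "int set \<Rightarrow> bool" where
  "sidon A \<longleftrightarrow> finite A \<and>
     (\<forall>a\<in>A. \<forall>b\<in>A. \<forall>c\<in>A. \<forall>d\<in>A. a + b = c + d \<longrightarrow> {a, b} = {c, d})"

definition h :: "nat \<Rightarrow> nat" where
  "h N = Max {card A | A. A \<subseteq> {1..int N} \<and> sidon A}"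

end

theory Submission imports Defs "HOL-Analysis.Analysis" begin

lemma closed_form:
  fixes n :: nat
  shows "(\<Sum>d\<in>{-int n..int n}. int (nat (int n - \<bar>d\<bar>))) = int n ^ 2"
proof (induction n)
  case 0
  then show ?case by simp
next
  case (Suc n)
  have e: "{-int (Suc n)..int (Suc n)} = insert (-int (Suc n)) (insert (int (Suc n)) {-int n..int n})"
    by auto
  have "(\<Sum>d\<in>{-int (Suc n)..int (Suc n)}. int (nat (int (Suc n) - \<bar>d\<bar>)))
      = (\<Sum>d\<in>{-int n..int n}. int (nat (int (Suc n) - \<bar>d\<bar>)))"
    unfolding e by simp
  also have "\<dots> = (\<Sum>d\<in>{-int n..int n}. int (nat (int n - \<bar>d\<bar>)) + 1)"
    by (rule sum.cong) auto
  also have "\<dots> = (\<Sum>d\<in>{-int n..int n}. int (nat (int n - \<bar>d\<bar>))) + (\<Sum>d\<in>{-int n..int n}. 1)"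
    by (rule sum.distrib)
  also have "\<dots> = int n ^ 2 + (2 * int n + 1)"
    using Suc.IH by simp
  finally show ?case by (simp add: power2_eq_square algebra_simps)
qed

lemma count_windows:
  fixes x y u :: int
  assumes "u \<ge> 1"
  shows "card {m. m \<le> x \<and> x \<le> m + u - 1 \<and> m \<le> y \<and> y \<le> m + u - 1} = nat (u - \<bar>x - y\<bar>)"
proof -
  have "{m. m \<le> x \<and> x \<le> m + u - 1 \<and> m \<le> y \<and> y \<le> m + u - 1} = {max x y - u + 1 .. min x y}"
    by auto
  then have "card {m. m \<le> x \<and> x \<le> m + u - 1 \<and> m \<le> y \<and> y \<le> m + u - 1} = nat (min x y - (max x y - u + 1) + 1)"
    by simp
  also have "min x y - (max x y - u + 1) + 1 = u - \<bar>x - y\<bar>" by arith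
  finally show ?thesis .
qed

lemma key:
  fixes A :: "int set" and N u :: int
  assumes S: "sidon A" and AN: "A \<subseteq> {1..N}" and u: "u \<ge> 1" and N: "N \<ge> 1"
  shows "(int (card A))^2 * u \<le> (N+u-1) * (int (card A) + u - 1)"
proof -
  have fin: "finite A" using S unfolding sidon_def by auto
  define k where "k = int (card A)"
  define M where "M = {2-u..N}"
  define f where "f m x = (if m \<le> x \<and> x \<le> m+u-1 then 1 else (0::int))" for m x
  define a where "a m = (\<Sum>x\<in>A. f m x)" for m
  define w where "w d = int (nat (u - \<bar>d\<bar>))" for d
  have finM: "finite M" by (simp add: M_def)
  have cardM: "int (card M) = N+u-1" using N u by (simp add: M_def)
  have S1: "(\<Sum>m\<in>M. a m) = k*u"
  proof -
    have "(\<Sum>m\<in>M. a m) = (\<Sum>x\<in>A. \<Sum>m\<in>M. f m x)"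
      unfolding a_def by (rule sum.swap)
    also have "\<dots> = (\<Sum>x\<in>A. u)"
    proof (rule sum.cong[OF refl])
      fix x assume x: "x \<in> A"
      have "(\<Sum>m\<in>M. f m x) = (\<Sum>m\<in>{m\<in>M. m \<le> x \<and> x \<le> m+u-1}. 1)"
        by (subst sum.inter_filter[OF finM]) (auto intro!: sum.cong simp: f_def)
      also have "{m\<in>M. m \<le> x \<and> x \<le> m+u-1} = {x-u+1..x}"
        using x AN by (auto simp: M_def)
      finally show "(\<Sum>m\<in>M. f m x) = u" using u by simp
    qed
    finally show ?thesis by (simp add: k_def)
  qed
  have S2: "(\<Sum>m\<in>M. (a m)^2) \<le> k*u + (u^2 - u)"
  proof -
    have "(\<Sum>m\<in>M. (a m)^2) = (\<Sum>m\<in>M. \<Sum>x\<in>A. \<Sum>y\<in>A. f m x * f m y)"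
      unfolding a_def power2_eq_square by (simp add: sum_product)
    also have "\<dots> = (\<Sum>x\<in>A. \<Sum>m\<in>M. \<Sum>y\<in>A. f m x * f m y)"
      by (rule sum.swap)
    also have "\<dots> = (\<Sum>x\<in>A. \<Sum>y\<in>A. \<Sum>m\<in>M. f m x * f m y)"
      by (rule sum.cong[OF refl], rule sum.swap)
    also have "\<dots> = (\<Sum>x\<in>A. \<Sum>y\<in>A. w (x - y))"
    proof (rule sum.cong[OF refl], rule sum.cong[OF refl])
      fix x y assume x: "x \<in> A" and y: "y \<in> A"
      have "(\<Sum>m\<in>M. f m x * f m y) = (\<Sum>m\<in>{m\<in>M. m \<le> x \<and> x \<le> m + u - 1 \<and> m \<le> y \<and> y \<le> m + u - 1}. 1)"
        by (subst sum.inter_filter[OF finM]) (auto intro!: sum.cong simp: f_def)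
      also have "{m\<in>M. m \<le> x \<and> x \<le> m + u - 1 \<and> m \<le> y \<and> y \<le> m + u - 1} = {m. m \<le> x \<and> x \<le> m + u - 1 \<and> m \<le> y \<and> y \<le> m + u - 1}"
        using x AN by (auto simp: M_def)
      finally show "(\<Sum>m\<in>M. f m x * f m y) = w (x - y)"
        using count_windows[OF u, of x y] by (simp add: w_def)
    qed
    also have "\<dots> = (\<Sum>x\<in>A. w 0 + (\<Sum>y\<in>A-{x}. w (x - y)))"
      by (rule sum.cong[OF refl]) (simp add: fin sum.remove)
    also have "\<dots> = k*u + (\<Sum>x\<in>A. \<Sum>y\<in>A-{x}. w (x - y))"
      using u by (simp add: sum.distrib k_def w_def)
    also have "(\<Sum>x\<in>A. \<Sum>y\<in>A-{x}. w (x - y)) = (\<Sum>p\<in>Sigma A (\<lambda>x. A-{x}). w (fst p - snd p))"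
      by (simp add: sum.Sigma fin split_beta)
    also have "\<dots> \<le> u^2 - u"
    proof -
      define P where "P = Sigma A (\<lambda>x. A-{x})"
      define g where "g p = fst p - snd p" for p :: "int \<times> int"
      have finP: "finite P" using fin by (simp add: P_def)
      have inj: "inj_on g P"
      proof (rule inj_onI)
        fix p q assume p: "p \<in> P" and q: "q \<in> P" and e: "g p = g q"
        obtain x y where pxy: "p = (x,y)" by fastforce
        obtain x' y' where qxy: "q = (x',y')" by fastforce
        have xy: "x \<in> A" "y \<in> A" "x \<noteq> y" using p by (auto simp: P_def pxy)
        have xy': "x' \<in> A" "y' \<in> A" "x' \<noteq> y'" using q by (auto simp: P_def qxy)
        have "x + y' = x' + y" using e by (simp add: g_def pxy qxy)
        then have "{x, y'} = {x', y}" using S xy xy' unfolding sidon_def by blast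
        then have "x = x' \<and> y' = y" using xy xy' by (auto simp: doubleton_eq_iff)
        then show "p = q" by (simp add: pxy qxy)
      qed
      have "(\<Sum>p\<in>P. w (fst p - snd p)) = (\<Sum>d\<in>g ` P. w d)"
        using sum.reindex[OF inj, of w] by (simp add: g_def comp_def)
      also have "\<dots> = (\<Sum>d\<in>g ` P \<inter> {-u..u}. w d)"
        by (rule sum.mono_neutral_right) (auto simp: finP w_def)
      also have "\<dots> \<le> (\<Sum>d\<in>{-u..u}-{0}. w d)"
      proof (rule sum_mono2)
        show "g ` P \<inter> {-u..u} \<subseteq> {-u..u}-{0}" by (auto simp: P_def g_def)
      qed (auto simp: w_def)
      also have "\<dots> = (\<Sum>d\<in>{-u..u}. w d) - w 0"
        using u by (simp add: sum_diff1)
      also have "(\<Sum>d\<in>{-u..u}. w d) = u^2"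
        using closed_form[of "nat u"] u by (simp add: w_def)
      finally show ?thesis using u by (simp add: w_def P_def)
    qed
    finally show ?thesis by simp
  qed
  have CS: "(\<Sum>m\<in>M. a m)^2 \<le> (\<Sum>m\<in>M. (a m)^2) * int (card M)"
  proof -
    have "real_of_int ((\<Sum>m\<in>M. a m)^2) \<le> real_of_int ((\<Sum>m\<in>M. (a m)^2) * int (card M))"
      using sum_squared_le_sum_of_squares[of "\<lambda>m. real_of_int (a m)" M] by simp
    then show ?thesis by (simp only: of_int_le_iff)
  qed
  have "u * (k^2 * u) \<le> u * ((N+u-1) * (k + u - 1))"
  proof -
    have "u * (k^2 * u) = (k*u)^2" by (simp add: power2_eq_square)
    also have "\<dots> \<le> (k*u + (u^2 - u)) * (N+u-1)"
    proof -
      have m: "(\<Sum>m\<in>M. (a m)^2) * (N+u-1) \<le> (k*u + (u^2 - u)) * (N+u-1)"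
        by (rule mult_right_mono[OF S2]) (use N u in simp)
      show ?thesis using CS S1 cardM m by simp
    qed
    also have "\<dots> = u * ((N+u-1) * (k + u - 1))" by (simp add: power2_eq_square algebra_simps)
    finally show ?thesis .
  qed
  then show ?thesis using u by (simp add: k_def)
qed

lemma arith_final:
  fixes s r nn k :: int
  assumes r2a: "r \<ge> 2" and rs: "r^2 \<le> s" and sr: "s \<le> r^2+2*r" and sN: "s^2 \<le> nn" and Ns: "nn \<le> s^2+2* s"
    and key: "k^2*(s*r) \<le> (nn+s*r-1)*(k+s*r-1)" and k0: "k \<ge> 0"
  shows "k \<le> s+r+2"
proof (rule ccontr)
  assume "\<not> k \<le> s+r+2"
  then have kk: "k \<ge> s+r+3" by simp
  have r1: "r \<ge> 1" using r2a by simp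
  define u where "u = s*r"
  define C where "C = nn+u-1"
  define k0 where "k0 = s+r+3"
  have "r^2 \<ge> 1" using r1 by (simp add: one_le_power)
  then have s1: "s \<ge> 1" using rs by linarith
  have u1: "u \<ge> s" using r1 s1 by (simp add: u_def)
  have Cle: "C \<le> s^2+2* s+s*r-1" using Ns by (simp add: C_def u_def)
  have id: "k0^2*u - (s^2+2* s+s*r-1)*(k0+u-1) = s* s*(r^2+2*r-s) + s*(r^3+5*r^2+6*r-3-4* s) + r+2"
    by (simp add: k0_def u_def power2_eq_square power3_eq_cube algebra_simps)
  have p1: "s* s*(r^2+2*r-s) \<ge> 0" using sr s1 by simp
  have r3: "r^3 \<ge> 0" using r1 by simp
  have r2: "r^2 \<ge> 0" by simp
  have r2b: "r^2 \<ge> 2*r" using r2a by (simp add: power2_eq_square)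
  have r3b: "r^3 \<ge> 4*r"
  proof -
    have "r^3 = r^2 * r" by (simp add: power3_eq_cube power2_eq_square)
    also have "\<dots> \<ge> (2*r)*r" using r2b r1 by (intro mult_right_mono) auto
    finally have "2*r*r \<le> r^3" .
    moreover have "2*2*r \<le> 2*r*r" using r2a r1 by (intro mult_right_mono) auto
    ultimately show ?thesis by simp
  qed
  have p2: "s*(r^3+5*r^2+6*r-3-4* s) > 0" using s1 r3b r2b sr r1 by (intro mult_pos_pos) linarith+
  have f0: "k0^2*u > C*(k0+u-1)"
  proof -
    have "C*(k0+u-1) \<le> (s^2+2* s+s*r-1)*(k0+u-1)"
      by (rule mult_right_mono[OF Cle]) (use u1 s1 r1 in \<open>simp add: k0_def\<close>)
    then show ?thesis using id p1 p2 r1 by linarith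
  qed
  have mono: "k^2*u - C*k \<ge> k0^2*u - C*k0"
  proof -
    have "k^2*u - C*k - (k0^2*u - C*k0) = (k-k0)*((k+k0)*u - C)"
      by (simp add: power2_eq_square algebra_simps)
    moreover have "(k+k0)*u - C \<ge> 0"
    proof -
      have "(k+k0)*u \<ge> (2*k0)*u" using kk u1 s1 by (intro mult_right_mono) (auto simp: k0_def)
      moreover have "(2*k0)*u \<ge> C"
      proof -
        have "(2*k0)*u = 2* s* s*r + 2* s*r*r + 6* s*r" by (simp add: k0_def u_def algebra_simps)
        moreover have "s* s*r \<ge> s* s" using r1 s1 by simp
        moreover have "s*r*r \<ge> 0" using r1 s1 by simp
        moreover have "s*r \<ge> s" using r1 s1 by simp
        moreover have "s* s \<ge> 0" by simp
        ultimately show ?thesis using Cle s1 unfolding power2_eq_square by linarith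
      qed
      ultimately show ?thesis by linarith
    qed
    moreover have "k - k0 \<ge> 0" using kk by (simp add: k0_def)
    ultimately show ?thesis by (metis diff_ge_0_iff_ge mult_nonneg_nonneg)
  qed
  have "k^2*u \<le> C*(k+u-1)" using key by (simp add: C_def u_def)
  then show False using mono f0 by (simp add: algebra_simps)
qed

lemma floor_sqrt_bounds:
  fixes n :: int
  assumes "n \<ge> 0"
  shows "\<lfloor>sqrt (real_of_int n)\<rfloor> \<ge> 0 \<and> \<lfloor>sqrt (real_of_int n)\<rfloor>^2 \<le> n \<and> n \<le> \<lfloor>sqrt (real_of_int n)\<rfloor>^2 + 2*\<lfloor>sqrt (real_of_int n)\<rfloor>"
proof -
  define t where "t = sqrt (real_of_int n)"
  define f where "f = \<lfloor>t\<rfloor>"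
  have t0: "t \<ge> 0" using assms by (simp add: t_def)
  have tt: "t^2 = real_of_int n" using assms by (simp add: t_def)
  have f1: "real_of_int f \<le> t" "t < real_of_int f + 1" by (simp_all add: f_def)
  have f0: "f \<ge> 0" using t0 by (simp add: f_def)
  have "real_of_int (f^2) \<le> real_of_int n"
    using power_mono[OF f1(1), of 2] f0 tt by simp
  then have a: "f^2 \<le> n" by (simp only: of_int_le_iff)
  have "real_of_int n < real_of_int ((f+1)^2)"
    using power_strict_mono[OF f1(2), of 2] t0 tt by simp
  then have "n < (f+1)^2" by (simp only: of_int_less_iff)
  then have b: "n \<le> f^2 + 2*f" by (simp add: power2_eq_square algebra_simps)
  show ?thesis using a b f0 by (simp add: f_def t_def)
qed

theorem mainTheorem9:
  fixes N :: nat
  assumes "N \<ge> 16"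
  shows "int (h N) \<le> \<lfloor>sqrt (real N)\<rfloor> + \<lfloor>sqrt (real_of_int \<lfloor>sqrt (real N)\<rfloor>)\<rfloor> + 2"
proof -
  define s where "s = \<lfloor>sqrt (real N)\<rfloor>"
  define r where "r = \<lfloor>sqrt (real_of_int s)\<rfloor>"
  have sb: "s \<ge> 0 \<and> s^2 \<le> int N \<and> int N \<le> s^2 + 2* s"
    using floor_sqrt_bounds[of "int N"] by (simp add: s_def)
  have s4: "s \<ge> 4"
  proof (rule ccontr)
    assume "\<not> s \<ge> 4"
    then have "s \<le> 3" by simp
    then have "s^2 + 2* s \<le> 3^2 + 2*3" using sb by (intro add_mono power_mono) auto
    then show False using sb assms by simp
  qed
  have rb: "r \<ge> 0 \<and> r^2 \<le> s \<and> s \<le> r^2 + 2*r"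
    using floor_sqrt_bounds[of s] sb by (simp add: r_def)
  have r2: "r \<ge> 2"
  proof (rule ccontr)
    assume "\<not> r \<ge> 2"
    then have "r \<le> 1" by simp
    then have "r^2 + 2*r \<le> 1^2 + 2*1" using rb by (intro add_mono power_mono) auto
    then show False using rb s4 by simp
  qed
  have bound: "int (card A) \<le> s + r + 2" if A: "A \<subseteq> {1..int N}" "sidon A" for A
  proof -
    have "s * r \<ge> 1 * 1" using s4 r2 by (intro mult_mono) auto
    then have sr1: "s * r \<ge> 1" by simp
    have "(int (card A))^2 * (s*r) \<le> (int N + s*r - 1) * (int (card A) + s*r - 1)"
      using key[OF A(2) A(1) sr1] assms by simp
    then show ?thesis using arith_final[of r s "int N" "int (card A)"] r2 rb sb by simp
  qed
  define SS where "SS = {card A | A. A \<subseteq> {1..int N} \<and> sidon A}"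
  have "SS \<subseteq> {0..N}"
  proof
    fix c assume "c \<in> SS"
    then obtain A where "c = card A" "A \<subseteq> {1..int N}" by (auto simp: SS_def)
    then have "c \<le> card {1..int N}" using card_mono[of "{1..int N}" A] by simp
    then show "c \<in> {0..N}" by simp
  qed
  then have finS: "finite SS" by (rule finite_subset) simp
  have "sidon {}" by (simp add: sidon_def)
  then have neS: "SS \<noteq> {}" by (auto simp: SS_def)
  have "h N \<in> SS" unfolding h_def SS_def[symmetric] using finS neS by (rule Max_in)
  then obtain A where "h N = card A" "A \<subseteq> {1..int N}" "sidon A" by (auto simp: SS_def)
  then have "int (h N) \<le> s + r + 2" using bound by simp
  then show ?thesis by (simp add: s_def r_def)
qed

end
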